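(* Let $(M,d)$ be a complete pointed metric space, $k\in\mathbb N$ and $\lambda_1,\dots,\lambda_k\in\mathbb R$. Then the set $\sum_{i=1}^k\lambda_i\delta(M):=\{\sum_{i=1}^k\lambda_i\delta(x_i):x_1,\dots,x_k\in M\}$ is a norm-closed subset of $\mathcal F(M)$.
   Context: A pointed metric space is a metric space with a distinguished point $0$. $\mathrm{Lip}_0(M)$ denotes the real-valued Lipschitz functions on $M$ vanishing at $0$, normed by the Lipschitz constant. $\delta:M\to\mathrm{Lip}_0(M)^*$, $\delta(x)(\varphi)=\varphi(x)$; the Lipschitz-free space $\mathcal F(M)$ is the norm-closed linear span of $\delta(M)$ in $\mathrm{Lip}_0(M)^*$. *)

theory Defs
  imports "HOL-Analysis.Analysis"
begin

text \<open>Pointed metric space: the type 'a (a metric space) with base point z.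
  Lip_0(M): real Lipschitz functions vanishing at z.\<close>

definition Lip0 :: "'a::metric_space \<Rightarrow> ('a \<Rightarrow> real) set" where
  "Lip0 z = {f. (\<exists>C. lipschitz_on C UNIV f) \<and> f z = 0}"

definition Lip0_ball :: "'a::metric_space \<Rightarrow> ('a \<Rightarrow> real) set" where
  "Lip0_ball z = {f. lipschitz_on 1 UNIV f \<and> f z = 0}"

text \<open>Elements of the dual Lip_0(M)^*: bounded linear functionals on Lip0 z,
  normalised to be 0 outside Lip0 z (so that equality is extensional).\<close>
definition Lip0_dual :: "'a::metric_space \<Rightarrow> (('a \<Rightarrow> real) \<Rightarrow> real) set" where
  "Lip0_dual z = {\<phi>. (\<forall>f. f \<notin> Lip0 z \<longrightarrow> \<phi> f = 0)
     \<and> (\<forall>f\<in>Lip0 z. \<forall>g\<in>Lip0 z. \<phi> (\<lambda>x. f x + g x) = \<phi> f + \<phi> g)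
     \<and> (\<forall>c. \<forall>f\<in>Lip0 z. \<phi> (\<lambda>x. c * f x) = c * \<phi> f)
     \<and> (\<exists>K. \<forall>f\<in>Lip0_ball z. \<bar>\<phi> f\<bar> \<le> K)}"

definition dual_norm :: "'a::metric_space \<Rightarrow> (('a \<Rightarrow> real) \<Rightarrow> real) \<Rightarrow> real" where
  "dual_norm z \<phi> = (SUP f\<in>Lip0_ball z. \<bar>\<phi> f\<bar>)"

definition delta :: "'a::metric_space \<Rightarrow> 'a \<Rightarrow> ('a \<Rightarrow> real) \<Rightarrow> real" where
  "delta z x = (\<lambda>f. if f \<in> Lip0 z then f x else 0)"

definition delta_span :: "'a::metric_space \<Rightarrow> (('a \<Rightarrow> real) \<Rightarrow> real) set" where
  "delta_span z = {\<phi>. \<exists>(n::nat) (a::nat \<Rightarrow> real) (x::nat \<Rightarrow> 'a).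
      \<phi> = (\<lambda>f. \<Sum>i<n. a i * delta z (x i) f)}"

definition free_space :: "'a::metric_space \<Rightarrow> (('a \<Rightarrow> real) \<Rightarrow> real) set" where
  "free_space z = {\<phi>\<in>Lip0_dual z. \<forall>e>0. \<exists>\<psi>\<in>delta_span z.
      dual_norm z (\<lambda>f. \<phi> f - \<psi> f) < e}"

end

theory Submission
  imports Defs
begin

definition sx :: "'a::metric_space \<Rightarrow> nat \<Rightarrow> (nat \<Rightarrow> real) \<Rightarrow> (nat \<Rightarrow> 'a) \<Rightarrow> (('a \<Rightarrow> real) \<Rightarrow> real)"
  where "sx z k lam x = (\<lambda>f. \<Sum>i<k. lam i * delta z (x i) f)"

lemma ball_Lip0: "f \<in> Lip0_ball z \<Longrightarrow> f \<in> Lip0 z"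
  unfolding Lip0_ball_def Lip0_def by auto

lemma zero_ball: "(\<lambda>x. 0) \<in> Lip0_ball z"
  unfolding Lip0_ball_def by (auto simp: lipschitz_on_def)

lemma Lip0_add: "f \<in> Lip0 z \<Longrightarrow> g \<in> Lip0 z \<Longrightarrow> (\<lambda>x. f x + g x) \<in> Lip0 z"
  unfolding Lip0_def by (auto intro: lipschitz_on_add)

lemma Lip0_cmult: "f \<in> Lip0 z \<Longrightarrow> (\<lambda>x. c * f x) \<in> Lip0 z"
  unfolding Lip0_def by (auto intro: lipschitz_on_cmult_real)

lemma sx_eval: "f \<in> Lip0 z \<Longrightarrow> sx z k lam x f = (\<Sum>i<k. lam i * f (x i))"
  unfolding sx_def delta_def by simp

lemma sx_out: "f \<notin> Lip0 z \<Longrightarrow> sx z k lam x f = 0"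
  unfolding sx_def delta_def by simp

lemma ball_bound: assumes "f \<in> Lip0_ball z" shows "\<bar>f p\<bar> \<le> dist p z"
proof -
  have "lipschitz_on 1 UNIV f" "f z = 0" using assms unfolding Lip0_ball_def by auto
  then have "dist (f p) (f z) \<le> 1 * dist p z" by (meson UNIV_I lipschitz_onD)
  then show ?thesis using \<open>f z = 0\<close> by (simp add: dist_real_def)
qed

lemma sx_dual: "sx z k lam x \<in> Lip0_dual z"
proof -
  have add: "sx z k lam x (\<lambda>p. f p + g p) = sx z k lam x f + sx z k lam x g"
    if "f \<in> Lip0 z" "g \<in> Lip0 z" for f g
    using that Lip0_add[OF that] by (simp add: sx_eval sum.distrib distrib_left)
  have mul: "sx z k lam x (\<lambda>p. c * f p) = c * sx z k lam x f" if "f \<in> Lip0 z" for f c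
    using that Lip0_cmult[OF that] by (simp add: sx_eval sum_distrib_left algebra_simps)
  have bd: "\<bar>sx z k lam x f\<bar> \<le> (\<Sum>i<k. \<bar>lam i\<bar> * dist (x i) z)" if "f \<in> Lip0_ball z" for f
  proof -
    have "\<bar>sx z k lam x f\<bar> = \<bar>\<Sum>i<k. lam i * f (x i)\<bar>" using sx_eval ball_Lip0[OF that] by metis
    also have "\<dots> \<le> (\<Sum>i<k. \<bar>lam i * f (x i)\<bar>)" by (rule sum_abs)
    also have "\<dots> \<le> (\<Sum>i<k. \<bar>lam i\<bar> * dist (x i) z)"
      by (intro sum_mono) (simp add: abs_mult ball_bound[OF that] mult_left_mono)
    finally show ?thesis .
  qed
  show ?thesis unfolding Lip0_dual_def using add mul bd sx_out by blast
qed

lemma diff_dual: assumes "\<phi> \<in> Lip0_dual z" "\<psi> \<in> Lip0_dual z"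
  shows "(\<lambda>f. \<phi> f - \<psi> f) \<in> Lip0_dual z"
proof -
  from assms obtain K1 K2 where K: "\<forall>f\<in>Lip0_ball z. \<bar>\<phi> f\<bar> \<le> K1" "\<forall>f\<in>Lip0_ball z. \<bar>\<psi> f\<bar> \<le> K2"
    unfolding Lip0_dual_def by blast
  have "\<forall>f\<in>Lip0_ball z. \<bar>\<phi> f - \<psi> f\<bar> \<le> K1 + K2"
  proof
    fix f assume "f \<in> Lip0_ball z"
    then show "\<bar>\<phi> f - \<psi> f\<bar> \<le> K1 + K2" using K by (smt (verit))
  qed
  then show ?thesis using assms unfolding Lip0_dual_def by (auto simp: algebra_simps)
qed

lemma dual_bdd: assumes "\<psi> \<in> Lip0_dual z" shows "bdd_above ((\<lambda>f. \<bar>\<psi> f\<bar>) ` Lip0_ball z)"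
  using assms unfolding Lip0_dual_def bdd_above_def by blast

lemma dual_bound: assumes "\<psi> \<in> Lip0_dual z" "f \<in> Lip0_ball z" shows "\<bar>\<psi> f\<bar> \<le> dual_norm z \<psi>"
  unfolding dual_norm_def by (rule cSUP_upper[OF assms(2) dual_bdd[OF assms(1)]])

lemma dual_norm_le: assumes "\<And>f. f \<in> Lip0_ball z \<Longrightarrow> \<bar>\<psi> f\<bar> \<le> B" shows "dual_norm z \<psi> \<le> B"
  unfolding dual_norm_def using zero_ball assms by (intro cSUP_least) auto

lemma dual_scale: assumes "\<psi> \<in> Lip0_dual z" "f \<in> Lip0 z" "lipschitz_on C UNIV f"
  shows "\<bar>\<psi> f\<bar> \<le> (C + 1) * dual_norm z \<psi>"
proof -
  have C: "C \<ge> 0" using assms(3) lipschitz_on_nonneg by blast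
  define g where "g = (\<lambda>p. (1 / (C+1)) * f p)"
  have "lipschitz_on (\<bar>1/(C+1)\<bar> * C) UNIV g" unfolding g_def by (rule lipschitz_on_cmult_real[OF assms(3)])
  moreover have "\<bar>1/(C+1)\<bar> * C \<le> 1" using C by (simp add: field_simps)
  ultimately have "lipschitz_on 1 UNIV g" using lipschitz_on_le by blast
  moreover have "g z = 0" using assms(2) unfolding g_def Lip0_def by simp
  ultimately have gb: "g \<in> Lip0_ball z" unfolding Lip0_ball_def by simp
  have eq: "f = (\<lambda>p. (C+1) * g p)" unfolding g_def using C by (auto simp: field_simps)
  have "\<psi> (\<lambda>p. (C+1) * g p) = (C+1) * \<psi> g" using assms(1) ball_Lip0[OF gb] unfolding Lip0_dual_def by blast
  then have "\<psi> f = (C+1) * \<psi> g" using eq by simp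
  then have "\<bar>\<psi> f\<bar> = (C+1) * \<bar>\<psi> g\<bar>" using C by (simp add: abs_mult)
  also have "\<dots> \<le> (C+1) * dual_norm z \<psi>" using dual_bound[OF assms(1) gb] C by (simp add: mult_left_mono)
  finally show ?thesis .
qed


lemma merge_id:
  assumes "i < k" "j < k" "i \<noteq> j"
  shows "sx z k (lam(i := lam i + lam j, j := 0)) x f
       = sx z k lam x f + lam j * (delta z (x i) f - delta z (x j) f)"
proof -
  let ?d = "\<lambda>l. delta z (x l) f"
  have pt: "(lam(i := lam i + lam j, j := 0)) l * ?d l
      = lam l * ?d l + ((if l = i then lam j * ?d i else 0) - (if l = j then lam j * ?d j else 0))" for l
    using assms(3) by (auto simp: algebra_simps)
  have "sx z k (lam(i := lam i + lam j, j := 0)) x f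
      = (\<Sum>l<k. lam l * ?d l) + ((\<Sum>l<k. (if l = i then lam j * ?d i else 0)) - (\<Sum>l<k. (if l = j then lam j * ?d j else 0)))"
    unfolding sx_def pt by (simp add: sum.distrib sum_subtractf)
  also have "\<dots> = sx z k lam x f + lam j * (?d i - ?d j)"
    using assms by (simp add: sx_def algebra_simps)
  finally show ?thesis .
qed

lemma merge_back:
  assumes "i < k" "j < k" "i \<noteq> j" "\<phi> = sx z k (lam(i := lam i + lam j, j := 0)) y"
  shows "\<phi> = sx z k lam (y(j := y i))"
proof
  fix f
  have "sx z k (lam(i := lam i + lam j, j := 0)) y f = sx z k (lam(i := lam i + lam j, j := 0)) (y(j := y i)) f"
    unfolding sx_def by (intro sum.cong) auto
  also have "\<dots> = sx z k lam (y(j := y i)) f"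
    using merge_id[OF assms(1-3), of z lam "y(j := y i)" f] assms(3) by simp
  finally show "\<phi> f = sx z k lam (y(j := y i)) f" using assms(4) by simp
qed

lemma merge_approx:
  assumes "\<phi> \<in> Lip0_dual z" "i < k" "j < k" "i \<noteq> j"
    and ap: "\<forall>e>0. \<exists>x. dual_norm z (\<lambda>f. \<phi> f - sx z k lam x f) < e \<and> dist (x i) (x j) < e"
  shows "\<forall>e>0. \<exists>x. dual_norm z (\<lambda>f. \<phi> f - sx z k (lam(i := lam i + lam j, j := 0)) x f) < e"
proof (intro allI impI)
  fix e :: real assume e: "e > 0"
  define e' where "e' = min (e/3) (e / (2 * (\<bar>lam j\<bar> + 1)))"
  have e': "e' > 0" using e by (simp add: e'_def)
  obtain x where x: "dual_norm z (\<lambda>f. \<phi> f - sx z k lam x f) < e'" "dist (x i) (x j) < e'"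
    using ap e' by blast
  have "\<bar>lam j\<bar> * e' \<le> e/2"
  proof -
    have "e' \<le> e / (2 * (\<bar>lam j\<bar> + 1))" by (simp add: e'_def)
    then have "(\<bar>lam j\<bar> + 1) * e' \<le> e/2" by (simp add: field_simps)
    then show ?thesis using e' by (simp add: algebra_simps)
  qed
  have "dual_norm z (\<lambda>f. \<phi> f - sx z k (lam(i := lam i + lam j, j := 0)) x f) \<le> e' + \<bar>lam j\<bar> * e'"
  proof (rule dual_norm_le)
    fix f assume fb: "f \<in> Lip0_ball z"
    have b1: "\<bar>\<phi> f - sx z k lam x f\<bar> \<le> e'"
      using dual_bound[OF diff_dual[OF assms(1) sx_dual[of z k lam x]] fb] x(1) by linarith
    have "lipschitz_on 1 UNIV f" using fb unfolding Lip0_ball_def by auto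
    then have "dist (f (x i)) (f (x j)) \<le> 1 * dist (x i) (x j)" by (meson UNIV_I lipschitz_onD)
    then have "\<bar>f (x i) - f (x j)\<bar> \<le> e'" using x(2) by (simp add: dist_real_def)
    then have b2: "\<bar>lam j * (delta z (x i) f - delta z (x j) f)\<bar> \<le> \<bar>lam j\<bar> * e'"
      using ball_Lip0[OF fb] by (simp add: delta_def abs_mult mult_left_mono)
    show "\<bar>\<phi> f - sx z k (lam(i := lam i + lam j, j := 0)) x f\<bar> \<le> e' + \<bar>lam j\<bar> * e'"
      unfolding merge_id[OF assms(2-4)] using b1 b2 by linarith
  qed
  also have "\<dots> < e"
  proof -
    have "e' \<le> e/3" unfolding e'_def by (rule min.cobounded1)
    then show ?thesis using \<open>\<bar>lam j\<bar> * e' \<le> e/2\<close> e by linarith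
  qed
  finally show "\<exists>x. dual_norm z (\<lambda>f. \<phi> f - sx z k (lam(i := lam i + lam j, j := 0)) x f) < e" by blast
qed

lemma bump:
  assumes phi: "\<phi> \<in> Lip0_dual z"
    and d1: "dual_norm z (\<lambda>f. \<phi> f - sx z k lam x f) < \<eta>"
    and d2: "dual_norm z (\<lambda>f. \<phi> f - sx z k lam x0 f) < \<eta>"
    and c: "c < k" and r: "r > 0"
    and sep: "\<forall>i<k. i \<noteq> c \<and> lam i \<noteq> 0 \<longrightarrow> dist (x i) (x c) \<ge> r"
    and far: "\<forall>j<k. dist (x0 j) (x c) \<ge> r"
  shows "\<bar>lam c\<bar> * r < 2 * \<eta>"
proof -
  define g where "g = (\<lambda>p. max 0 (r - dist p (x c)))"
  define f where "f = (\<lambda>p. g p - g z)"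
  have lg: "lipschitz_on 1 UNIV g"
  proof (rule lipschitz_onI)
    fix p q :: 'a
    have "\<bar>dist p (x c) - dist q (x c)\<bar> \<le> dist p q"
      by (smt (verit) dist_commute dist_triangle)
    then show "dist (g p) (g q) \<le> 1 * dist p q" unfolding g_def dist_real_def by linarith
  qed simp
  have "lipschitz_on (1 + 0) UNIV f" unfolding f_def diff_conv_add_uminus
    by (intro lipschitz_on_add lg lipschitz_on_constant)
  then have fb: "f \<in> Lip0_ball z" unfolding Lip0_ball_def f_def by simp
  have fL: "f \<in> Lip0 z" by (rule ball_Lip0[OF fb])
  have sxf: "sx z k lam y f = (\<Sum>i<k. lam i * g (y i)) - (\<Sum>i<k. lam i) * g z" for y
  proof -
    have "sx z k lam y f = (\<Sum>i<k. lam i * f (y i))" by (rule sx_eval[OF fL])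
    also have "\<dots> = (\<Sum>i<k. lam i * g (y i)) - (\<Sum>i<k. lam i) * g z"
      by (simp add: f_def algebra_simps sum_subtractf sum_distrib_right sum_distrib_left)
    finally show ?thesis .
  qed
  have s0: "(\<Sum>i<k. lam i * g (x0 i)) = 0"
    using far unfolding g_def by (intro sum.neutral) auto
  have s1: "(\<Sum>i<k. lam i * g (x i)) = lam c * r"
  proof -
    have "(\<Sum>i<k. lam i * g (x i)) = lam c * g (x c) + (\<Sum>i\<in>{..<k} - {c}. lam i * g (x i))"
      using c by (simp add: sum.remove)
    also have "(\<Sum>i\<in>{..<k} - {c}. lam i * g (x i)) = 0"
      using sep unfolding g_def by (intro sum.neutral) auto
    finally show ?thesis using r by (simp add: g_def)
  qed
  have val: "sx z k lam x f - sx z k lam x0 f = lam c * r" using sxf s0 s1 by simp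
  have b1: "\<bar>\<phi> f - sx z k lam x f\<bar> < \<eta>"
    using dual_bound[OF diff_dual[OF phi sx_dual[of z k lam x]] fb] d1 by linarith
  have b2: "\<bar>\<phi> f - sx z k lam x0 f\<bar> < \<eta>"
    using dual_bound[OF diff_dual[OF phi sx_dual[of z k lam x0]] fb] d2 by linarith
  have "\<bar>lam c * r\<bar> < 2 * \<eta>" using b1 b2 val by linarith
  then show ?thesis using r by (simp add: abs_mult)
qed

lemma subseq_conv:
  fixes X :: "nat \<Rightarrow> nat \<Rightarrow> 'a::metric_space"
  assumes "compact K" "\<And>n c. X n c \<in> K"
  shows "\<exists>r y. strict_mono r \<and> (\<forall>c<k. (\<lambda>n. X (r n) c) \<longlonglongrightarrow> y c)"
proof (induction k)
  case 0
  show ?case by (rule exI[of _ id]) (auto simp: strict_mono_def)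
next
  case (Suc k)
  then obtain r y where r: "strict_mono r" "\<forall>c<k. (\<lambda>n. X (r n) c) \<longlonglongrightarrow> y c" by blast
  have "seq_compact K" using assms(1) by (rule compact_imp_seq_compact)
  moreover have "\<forall>n. X (r n) k \<in> K" using assms(2) by simp
  ultimately obtain l r' where r': "strict_mono r'" "((\<lambda>n. X (r n) k) \<circ> r') \<longlonglongrightarrow> l"
    by (rule seq_compactE)
  have sm: "strict_mono (r \<circ> r')" using r(1) r'(1) by (rule strict_mono_o)
  have "\<forall>c<Suc k. (\<lambda>n. X ((r \<circ> r') n) c) \<longlonglongrightarrow> (y(k := l)) c"
  proof (intro allI impI)
    fix c assume "c < Suc k"
    show "(\<lambda>n. X ((r \<circ> r') n) c) \<longlonglongrightarrow> (y(k := l)) c"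
    proof (cases "c = k")
      case True then show ?thesis using r'(2) by (simp add: o_def)
    next
      case False
      then have "c < k" using \<open>c < Suc k\<close> by simp
      then have "((\<lambda>n. X (r n) c) \<circ> r') \<longlonglongrightarrow> y c" using r(2) r'(1) by (intro LIMSEQ_subseq_LIMSEQ) auto
      then show ?thesis using False by (simp add: o_def)
    qed
  qed
  then show ?case using sm by blast
qed

lemma tb_compact:
  fixes T :: "'a::complete_space set"
  assumes "\<And>e. e > 0 \<Longrightarrow> \<exists>F. finite F \<and> T \<subseteq> (\<Union>x\<in>F. ball x e)"
  shows "compact (closure T)"
  unfolding compact_eq_totally_bounded
proof
  show "complete (closure T)" by (simp add: complete_eq_closed)
  show "\<forall>e>0. \<exists>k. finite k \<and> closure T \<subseteq> (\<Union>x\<in>k. ball x e)"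
  proof (intro allI impI)
    fix e :: real assume e: "e > 0"
    then obtain F where F: "finite F" "T \<subseteq> (\<Union>x\<in>F. ball x (e/2))" using assms[of "e/2"] by auto
    have "T \<subseteq> (\<Union>x\<in>F. cball x (e/2))" using F(2) by (meson UN_mono ball_subset_cball order_refl subset_trans)
    moreover have "closed (\<Union>x\<in>F. cball x (e/2))" using F(1) by (intro closed_UN) auto
    ultimately have "closure T \<subseteq> (\<Union>x\<in>F. cball x (e/2))" by (rule closure_minimal)
    also have "\<dots> \<subseteq> (\<Union>x\<in>F. ball x e)" by (intro UN_mono order_refl) (use e in auto)
    finally show "\<exists>k. finite k \<and> closure T \<subseteq> (\<Union>x\<in>k. ball x e)" using F(1) by blast
  qed
qed


lemma case2:
  fixes z :: "'a::complete_space"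
  assumes phi: "\<phi> \<in> Lip0_dual z"
    and ap: "\<forall>e>0. \<exists>x. dual_norm z (\<lambda>f. \<phi> f - sx z k lam x f) < e"
    and dpos: "\<delta> > 0"
    and sep: "\<forall>x. dual_norm z (\<lambda>f. \<phi> f - sx z k lam x f) < \<delta> \<longrightarrow>
        (\<forall>i<k. \<forall>j<k. i \<noteq> j \<and> lam i \<noteq> 0 \<and> lam j \<noteq> 0 \<longrightarrow> dist (x i) (x j) \<ge> \<delta>)"
  shows "\<exists>y. \<phi> = sx z k lam y"
proof -
  have "\<forall>n. \<exists>x. dual_norm z (\<lambda>f. \<phi> f - sx z k lam x f) < inverse (real (Suc n))"
    using ap by simp
  then obtain X where X: "\<And>n. dual_norm z (\<lambda>f. \<phi> f - sx z k lam (X n) f) < inverse (real (Suc n))"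
    by metis
  define X' where "X' n c = (if c < k \<and> lam c \<noteq> 0 then X n c else z)" for n c
  have sxX': "sx z k lam (X' n) = sx z k lam (X n)" for n
    unfolding sx_def X'_def by (intro ext sum.cong) auto
  define T where "T = range (\<lambda>(n, c). X' n c)"
  define m where "m = Min (insert 1 {\<bar>lam c\<bar> |c. c < k \<and> lam c \<noteq> 0})"
  have fin: "finite (insert 1 {\<bar>lam c\<bar> |c. c < k \<and> lam c \<noteq> 0})" by simp
  have mpos: "m > 0" unfolding m_def using fin by (subst Min_gr_iff) auto
  have mle: "m \<le> \<bar>lam c\<bar>" if "c < k" "lam c \<noteq> 0" for c
    unfolding m_def using fin that by (intro Min_le) auto
  have TB: "\<exists>F. finite F \<and> T \<subseteq> (\<Union>x\<in>F. ball x \<epsilon>)" if eps: "\<epsilon> > 0" for \<epsilon>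
  proof -
    define r where "r = min \<epsilon> \<delta>"
    have rpos: "r > 0" using eps dpos by (simp add: r_def)
    define \<eta> where "\<eta> = min \<delta> (m * r / 3)"
    have etapos: "\<eta> > 0" using dpos mpos rpos by (simp add: \<eta>_def)
    obtain N where N: "inverse (real (Suc N)) < \<eta>" using reals_Archimedean[OF etapos] by auto
    define F where "F = insert z ((\<lambda>(n, c). X n c) ` ({..N} \<times> {..<k}))"
    have finF: "finite F" unfolding F_def by simp
    have "T \<subseteq> (\<Union>x\<in>F. ball x \<epsilon>)"
    proof
      fix p assume "p \<in> T"
      then obtain n c where p: "p = X' n c" unfolding T_def by auto
      show "p \<in> (\<Union>x\<in>F. ball x \<epsilon>)"
      proof (cases "c < k \<and> lam c \<noteq> 0")
        case False
        then have "p = z" using p unfolding X'_def by presburger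
        then show ?thesis using eps unfolding F_def by auto
      next
        case True
        then have pX: "p = X n c" using p by (simp add: X'_def)
        show ?thesis
        proof (cases "n \<le> N")
          case True
          then have "p \<in> F" using pX \<open>c < k \<and> lam c \<noteq> 0\<close> unfolding F_def by (intro insertI2 image_eqI[of _ _ "(n, c)"]) auto
          then show ?thesis using eps by (intro UN_I[of p]) auto
        next
          case False
          then have "inverse (real (Suc n)) \<le> inverse (real (Suc N))" by (simp add: field_simps)
          then have dn: "dual_norm z (\<lambda>f. \<phi> f - sx z k lam (X n) f) < \<eta>" using X[of n] N by linarith
          have dN: "dual_norm z (\<lambda>f. \<phi> f - sx z k lam (X N) f) < \<eta>" using X[of N] N by linarith
          show ?thesis
          proof (rule ccontr)
            assume nin: "p \<notin> (\<Union>x\<in>F. ball x \<epsilon>)"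
            have far: "\<forall>j<k. dist (X N j) (X n c) \<ge> r"
            proof (intro allI impI)
              fix j assume "j < k"
              then have XF: "X N j \<in> F" unfolding F_def by (intro insertI2 image_eqI[of _ _ "(N, j)"]) auto
              have "dist (X N j) p \<ge> \<epsilon>"
              proof (rule ccontr)
                assume "\<not> dist (X N j) p \<ge> \<epsilon>"
                then have "p \<in> ball (X N j) \<epsilon>" by simp
                then show False using nin XF by blast
              qed
              then show "dist (X N j) (X n c) \<ge> r" using pX by (simp add: r_def)
            qed
            have dnd: "dual_norm z (\<lambda>f. \<phi> f - sx z k lam (X n) f) < \<delta>" using dn by (simp add: \<eta>_def)
            have sd: "\<forall>i<k. \<forall>j<k. i \<noteq> j \<and> lam i \<noteq> 0 \<and> lam j \<noteq> 0 \<longrightarrow> dist (X n i) (X n j) \<ge> \<delta>"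
              by (rule mp[OF spec[OF sep, of "X n"] dnd])
            have sepn: "\<forall>i<k. i \<noteq> c \<and> lam i \<noteq> 0 \<longrightarrow> dist (X n i) (X n c) \<ge> r"
            proof (intro allI impI)
              fix i assume i: "i < k" "i \<noteq> c \<and> lam i \<noteq> 0"
              have "dist (X n i) (X n c) \<ge> \<delta>" by (rule sd[rule_format, of i c]) (use i True in auto)
              moreover have "r \<le> \<delta>" by (simp add: r_def)
              ultimately show "dist (X n i) (X n c) \<ge> r" by linarith
            qed
            have "\<bar>lam c\<bar> * r < 2 * \<eta>"
              by (rule bump[OF phi dn dN _ rpos sepn far]) (use True in auto)
            moreover have "m * r \<le> \<bar>lam c\<bar> * r" using mle[of c] True rpos by (simp add: mult_right_mono)
            moreover have "\<eta> \<le> m * r / 3" by (simp add: \<eta>_def)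
            moreover have "m * r > 0" using mpos rpos by simp
            ultimately show False by linarith
          qed
        qed
      qed
    qed
    then show ?thesis using finF by blast
  qed
  have K: "compact (closure T)" by (rule tb_compact[OF TB])
  have inK: "X' n c \<in> closure T" for n c
  proof -
    have "X' n c \<in> T" unfolding T_def by (rule image_eqI[of _ _ "(n, c)"]) auto
    then show ?thesis using closure_subset by auto
  qed
  obtain r y where r: "strict_mono r" "\<forall>c<k. (\<lambda>n. X' (r n) c) \<longlonglongrightarrow> y c"
    using subseq_conv[of "closure T" X' k, OF K inK] by blast
  have val: "\<phi> f = (\<Sum>i<k. lam i * f (y i))" if fL: "f \<in> Lip0 z" for f
  proof -
    obtain C where C: "lipschitz_on C UNIV f" using fL unfolding Lip0_def by auto
    have cont: "continuous_on UNIV f" by (rule lipschitz_on_continuous_on[OF C])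
    define a where "a n = sx z k lam (X (r n)) f" for n
    have a_eq: "a n = (\<Sum>i<k. lam i * f (X' (r n) i))" for n
      unfolding a_def sxX'[symmetric] by (rule sx_eval[OF fL])
    have lim1: "a \<longlonglongrightarrow> (\<Sum>i<k. lam i * f (y i))"
      unfolding a_eq
    proof (intro tendsto_sum tendsto_mult_left)
      fix i assume "i \<in> {..<k}"
      then have "(\<lambda>n. X' (r n) i) \<longlonglongrightarrow> y i" using r(2) by simp
      then show "(\<lambda>n. f (X' (r n) i)) \<longlonglongrightarrow> f (y i)"
        using cont by (intro continuous_on_tendsto_compose[OF cont]) auto
    qed
    have inv0: "(\<lambda>n. inverse (real (Suc (r n)))) \<longlonglongrightarrow> 0"
      using LIMSEQ_subseq_LIMSEQ[OF LIMSEQ_inverse_real_of_nat r(1)] by (simp add: o_def)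
    have "(\<lambda>n. \<phi> f - a n) \<longlonglongrightarrow> 0"
    proof (rule Lim_null_comparison)
      show "\<forall>\<^sub>F n in sequentially. norm (\<phi> f - a n) \<le> (C + 1) * inverse (real (Suc (r n)))"
      proof (intro always_eventually allI)
        fix n
        have "\<bar>\<phi> f - a n\<bar> \<le> (C + 1) * dual_norm z (\<lambda>f. \<phi> f - sx z k lam (X (r n)) f)"
          unfolding a_def using dual_scale[OF diff_dual[OF phi sx_dual[of z k lam "X (r n)"]] fL C] by simp
        also have "\<dots> \<le> (C + 1) * inverse (real (Suc (r n)))"
          using X[of "r n"] lipschitz_on_nonneg[OF C] by (intro mult_left_mono) auto
        finally show "norm (\<phi> f - a n) \<le> (C + 1) * inverse (real (Suc (r n)))" by simp
      qed
      show "(\<lambda>n. (C + 1) * inverse (real (Suc (r n)))) \<longlonglongrightarrow> 0"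
        using tendsto_mult_right_zero[OF inv0] by simp
    qed
    from tendsto_diff[OF tendsto_const[of "\<phi> f"] this] have "a \<longlonglongrightarrow> \<phi> f" by simp
    then show ?thesis using lim1 LIMSEQ_unique by blast
  qed
  have "\<phi> = sx z k lam y"
  proof
    fix f show "\<phi> f = sx z k lam y f"
    proof (cases "f \<in> Lip0 z")
      case True then show ?thesis using val[OF True] sx_eval[OF True] by simp
    next
      case False
      have "\<phi> f = 0" using phi False unfolding Lip0_dual_def by blast
      then show ?thesis using sx_out[OF False] by simp
    qed
  qed
  then show ?thesis by blast
qed


lemma main_ind:
  fixes z :: "'a::complete_space"
  shows "card {i. i < k \<and> lam i \<noteq> 0} = N \<Longrightarrow> \<phi> \<in> Lip0_dual z \<Longrightarrow>
    (\<forall>e>0. \<exists>x. dual_norm z (\<lambda>f. \<phi> f - sx z k lam x f) < e) \<Longrightarrow> \<exists>y. \<phi> = sx z k lam y"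
proof (induction N arbitrary: lam rule: less_induct)
  case (less N)
  note phi = less.prems(2) and ap = less.prems(3)
  show ?case
  proof (cases "\<exists>i j. i < k \<and> j < k \<and> i \<noteq> j \<and> lam i \<noteq> 0 \<and> lam j \<noteq> 0 \<and>
      (\<forall>e>0. \<exists>x. dual_norm z (\<lambda>f. \<phi> f - sx z k lam x f) < e \<and> dist (x i) (x j) < e)")
    case True
    then obtain i j where ij: "i < k" "j < k" "i \<noteq> j" "lam i \<noteq> 0" "lam j \<noteq> 0"
      and apij: "\<forall>e>0. \<exists>x. dual_norm z (\<lambda>f. \<phi> f - sx z k lam x f) < e \<and> dist (x i) (x j) < e"
      by blast
    define lam' where "lam' = lam(i := lam i + lam j, j := 0)"
    have sub: "{l. l < k \<and> lam' l \<noteq> 0} \<subseteq> {l. l < k \<and> lam l \<noteq> 0} - {j}"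
      unfolding lam'_def using ij by auto
    have jin: "j \<in> {l. l < k \<and> lam l \<noteq> 0}" using ij by simp
    have "card {l. l < k \<and> lam' l \<noteq> 0} \<le> card ({l. l < k \<and> lam l \<noteq> 0} - {j})"
      by (rule card_mono[OF _ sub]) simp
    also have "\<dots> < card {l. l < k \<and> lam l \<noteq> 0}"
      using jin by (intro card_Diff1_less) auto
    finally have lt: "card {l. l < k \<and> lam' l \<noteq> 0} < N" using less.prems(1) by simp
    have ap': "\<forall>e>0. \<exists>x. dual_norm z (\<lambda>f. \<phi> f - sx z k lam' x f) < e"
      unfolding lam'_def by (rule merge_approx[OF phi ij(1-3) apij])
    obtain y' where "\<phi> = sx z k lam' y'" using less.IH[OF lt refl phi ap'] by blast
    then have "\<phi> = sx z k lam (y'(j := y' i))"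
      unfolding lam'_def by (rule merge_back[OF ij(1-3)])
    then show ?thesis by blast
  next
    case False
    define P where "P = {(i, j). i < k \<and> j < k \<and> i \<noteq> j \<and> lam i \<noteq> 0 \<and> lam j \<noteq> 0}"
    have finP: "finite P"
    proof -
      have "P \<subseteq> {..<k} \<times> {..<k}" unfolding P_def by auto
      then show ?thesis by (rule finite_subset) simp
    qed
    have "\<forall>p\<in>P. \<exists>e>0. \<forall>x. dual_norm z (\<lambda>f. \<phi> f - sx z k lam x f) < e \<longrightarrow> dist (x (fst p)) (x (snd p)) \<ge> e"
    proof
      fix p assume "p \<in> P"
      then obtain i j where p: "p = (i, j)" "i < k" "j < k" "i \<noteq> j" "lam i \<noteq> 0" "lam j \<noteq> 0"
        unfolding P_def by auto
      then have "\<not> (\<forall>e>0. \<exists>x. dual_norm z (\<lambda>f. \<phi> f - sx z k lam x f) < e \<and> dist (x i) (x j) < e)"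
        using False by blast
      then obtain e where e: "e > 0" "\<forall>x. \<not> (dual_norm z (\<lambda>f. \<phi> f - sx z k lam x f) < e \<and> dist (x i) (x j) < e)"
        by blast
      have "\<forall>x. dual_norm z (\<lambda>f. \<phi> f - sx z k lam x f) < e \<longrightarrow> dist (x (fst p)) (x (snd p)) \<ge> e"
        using e(2) p(1) by (simp add: not_less[symmetric])
      then show "\<exists>e>0. \<forall>x. dual_norm z (\<lambda>f. \<phi> f - sx z k lam x f) < e \<longrightarrow> dist (x (fst p)) (x (snd p)) \<ge> e"
        using e(1) by blast
    qed
    then obtain E where E: "\<And>p. p \<in> P \<Longrightarrow> E p > 0"
      "\<And>p x. p \<in> P \<Longrightarrow> dual_norm z (\<lambda>f. \<phi> f - sx z k lam x f) < E p \<Longrightarrow> dist (x (fst p)) (x (snd p)) \<ge> E p"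
      by metis
    define \<delta> where "\<delta> = Min (insert 1 (E ` P))"
    have finD: "finite (insert 1 (E ` P))" using finP by simp
    have dpos: "\<delta> > 0" unfolding \<delta>_def using finD E(1) by (subst Min_gr_iff) auto
    have dle: "\<delta> \<le> E p" if "p \<in> P" for p unfolding \<delta>_def using finD that by (intro Min_le) auto
    have sep: "\<forall>x. dual_norm z (\<lambda>f. \<phi> f - sx z k lam x f) < \<delta> \<longrightarrow>
        (\<forall>i<k. \<forall>j<k. i \<noteq> j \<and> lam i \<noteq> 0 \<and> lam j \<noteq> 0 \<longrightarrow> dist (x i) (x j) \<ge> \<delta>)"
    proof (intro allI impI)
      fix x i j assume d: "dual_norm z (\<lambda>f. \<phi> f - sx z k lam x f) < \<delta>" and ij: "i < k" "j < k"
        and c: "i \<noteq> j \<and> lam i \<noteq> 0 \<and> lam j \<noteq> 0"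
      have pP: "(i, j) \<in> P" unfolding P_def using ij c by simp
      have "dual_norm z (\<lambda>f. \<phi> f - sx z k lam x f) < E (i, j)" using d dle[OF pP] by linarith
      then have "dist (x i) (x j) \<ge> E (i, j)" using E(2)[OF pP] by simp
      then show "dist (x i) (x j) \<ge> \<delta>" using dle[OF pP] by linarith
    qed
    show ?thesis by (rule case2[OF phi ap dpos sep])
  qed
qed

theorem lemma3p16:
  fixes z :: "'a::complete_space" and k :: nat and lam :: "nat \<Rightarrow> real"
  defines "S \<equiv> {(\<lambda>f. \<Sum>i<k. lam i * delta z (x i) f) | x :: nat \<Rightarrow> 'a. True}"
  shows "S \<subseteq> free_space z \<and>
         (\<forall>\<phi>\<in>free_space z. (\<forall>e>0. \<exists>s\<in>S. dual_norm z (\<lambda>f. \<phi> f - s f) < e) \<longrightarrow> \<phi> \<in> S)"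
proof
  have S_eq: "S = range (sx z k lam)" unfolding S_def sx_def by auto
  show "S \<subseteq> free_space z"
  proof
    fix s assume "s \<in> S"
    then obtain x where s: "s = sx z k lam x" unfolding S_eq by auto
    have span: "s \<in> delta_span z" unfolding s sx_def delta_span_def by blast
    have dn0: "dual_norm z (\<lambda>f. s f - s f) = 0"
    proof -
      have "Lip0_ball z \<noteq> {}" using zero_ball by blast
      then show ?thesis unfolding dual_norm_def by simp
    qed
    have sd: "s \<in> Lip0_dual z" unfolding s by (rule sx_dual)
    have "\<forall>e>0. \<exists>\<psi>\<in>delta_span z. dual_norm z (\<lambda>f. s f - \<psi> f) < e"
      using span dn0 by (intro allI impI bexI[of _ s]) auto
    then show "s \<in> free_space z" unfolding free_space_def using sd by blast
  qed
  show "\<forall>\<phi>\<in>free_space z. (\<forall>e>0. \<exists>s\<in>S. dual_norm z (\<lambda>f. \<phi> f - s f) < e) \<longrightarrow> \<phi> \<in> S"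
  proof (intro ballI impI)
    fix \<phi> assume fs: "\<phi> \<in> free_space z" and ap: "\<forall>e>0. \<exists>s\<in>S. dual_norm z (\<lambda>f. \<phi> f - s f) < e"
    have phi: "\<phi> \<in> Lip0_dual z" using fs unfolding free_space_def by simp
    have ap': "\<forall>e>0. \<exists>x. dual_norm z (\<lambda>f. \<phi> f - sx z k lam x f) < e"
      using ap unfolding S_eq by auto
    obtain y where "\<phi> = sx z k lam y" using main_ind[OF refl phi ap'] by blast
    then show "\<phi> \<in> S" unfolding S_eq by simp
  qed
qed

end
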